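(* Let $s\in\mathbb{T}$ and let $C_s$ denote the surface $C_{\underline t}$ for any $\underline t\in\theta^{-1}(s)$. A point $\chi\in C_s$ is a singular point of $C_s$ if and only if there exist $w\in W$ and $\underline t'\in\theta^{-1}(w(s))$ such that the character of $Z(H(\underline t';1))$ corresponding to $\chi$ extends to a one-dimensional representation of $H(\underline t';1)$.
   Context: $H(k_0,k_1,u_0,u_1;1)$ is the $\mathbb{C}$-algebra generated by $V_0,V_1,V_0^\vee,V_1^\vee$ with relations $(V_0-k_0)(V_0+k_0^{-1})=0$, $(V_1-k_1)(V_1+k_1^{-1})=0$, $(V_0^\vee-u_0)(V_0^\vee+u_0^{-1})=0$, $(V_1^\vee-u_1)(V_1^\vee+u_1^{-1})=0$, $V_1^\vee V_1V_0V_0^\vee=1$. Its center is $\mathbb{C}[X_1,X_2,X_3]/(R_{\underline t})$ with $X_1=V_1^\vee V_1+V_0V_0^\vee$, $X_2=V_1V_0+V_0^\vee V_1^\vee$, $X_3=V_1V_0^\vee+(V_0^\vee)^{-1}V_1^{-1}$, and $R_{\underline t}=X_1X_2X_3-X_1^2-X_2^2-X_3^2+p_1X_1+p_2X_2+p_3X_3+p_0+4$ with $\bar k_i=k_i-k_i^{-1}$, $\bar u_i=u_i-u_i^{-1}$, $p_1=\bar u_0\bar k_0+\bar k_1\bar u_1$, $p_2=\bar u_1\bar u_0+\bar k_0\bar k_1$, $p_3=\bar k_0\bar u_1+\bar k_1\bar u_0$, $p_0=\bar k_0^2+\bar k_1^2+\bar u_0^2+\bar u_1^2-\bar k_0\bar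 k_1\bar u_0\bar u_1$; $C_{\underline t}=\{R_{\underline t}=0\}\subset\mathbb{C}^3$, and a point $\chi=(\chi_1,\chi_2,\chi_3)\in C_{\underline t}$ is identified with the character $X_i\mapsto\chi_i$ of the center. Let $\mathbb{T}=\mathrm{Spec}\,\mathbb{C}[P]$, $P$ the weight lattice of $D_4$, with coordinates $s_1,\dots,s_4,\delta$ satisfying $s_1s_2s_3s_4=\delta^2$, acted on by the Weyl group $W=W(D_4)$. Writing $\underline t=(t_1,t_2,t_3,t_4)=(k_0,k_1,u_0,u_1)$, define $\theta:(\mathbb{C}^* )^4\to\mathbb{T}$ by $s_1=t_1t_2$, $s_2=-t_1/t_2$, $s_3=-t_3/t_4$, $s_4=t_3t_4$, $\delta=t_1t_3$. The coefficient vector $(p_0,p_1,p_2,p_3)$ of $R_{\underline t}$ depends only on the $W$-orbit of $\theta(\underline t)$, so $C_s$ is well defined and equals $C_{\underline t'}$ for all $\underline t'\in\theta^{-1}(w(s))$, $w\in W$. *)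

theory Defs
  imports "HOL-Analysis.Analysis"
begin

type_synonym params = "complex \<times> complex \<times> complex \<times> complex"   (* (k0,k1,u0,u1) = (t1,t2,t3,t4) *)
type_synonym tpt = "complex \<times> complex \<times> complex \<times> complex \<times> complex" (* (s1,s2,s3,s4,delta) *)

definition bar :: "complex \<Rightarrow> complex" where "bar k = k - inverse k"

definition nonzero_params :: "params \<Rightarrow> bool" where
  "nonzero_params t = (case t of (k0,k1,u0,u1) \<Rightarrow> k0 \<noteq> 0 \<and> k1 \<noteq> 0 \<and> u0 \<noteq> 0 \<and> u1 \<noteq> 0)"

definition Rpoly :: "params \<Rightarrow> complex \<Rightarrow> complex \<Rightarrow> complex \<Rightarrow> complex" where
  "Rpoly t x1 x2 x3 = (case t of (k0,k1,u0,u1) \<Rightarrow>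
     let p1 = bar u0 * bar k0 + bar k1 * bar u1;
         p2 = bar u1 * bar u0 + bar k0 * bar k1;
         p3 = bar k0 * bar u1 + bar k1 * bar u0;
         p0 = (bar k0)^2 + (bar k1)^2 + (bar u0)^2 + (bar u1)^2 - bar k0 * bar k1 * bar u0 * bar u1
     in x1*x2*x3 - x1^2 - x2^2 - x3^2 + p1*x1 + p2*x2 + p3*x3 + p0 + 4)"

definition singular_point :: "params \<Rightarrow> complex \<times> complex \<times> complex \<Rightarrow> bool" where
  "singular_point t chi = (case chi of (c1,c2,c3) \<Rightarrow>
     Rpoly t c1 c2 c3 = 0 \<and>
     deriv (\<lambda>x. Rpoly t x c2 c3) c1 = 0 \<and>
     deriv (\<lambda>x. Rpoly t c1 x c3) c2 = 0 \<and>
     deriv (\<lambda>x. Rpoly t c1 c2 x) c3 = 0)"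

text \<open>A one-dimensional representation of H(k0,k1,u0,u1;1) is an algebra map to the complex
  numbers, i.e. scalars (images of V0,V1,V0^vee,V1^vee) satisfying the defining relations.
  It extends the central character chi iff X1,X2,X3 are sent to chi1,chi2,chi3.\<close>
definition one_dim_rep_extending :: "params \<Rightarrow> complex \<times> complex \<times> complex \<Rightarrow> bool" where
  "one_dim_rep_extending t chi = (case t of (k0,k1,u0,u1) \<Rightarrow> case chi of (c1,c2,c3) \<Rightarrow>
     (\<exists>v0 v1 w0 w1 :: complex.
        (v0 - k0) * (v0 + inverse k0) = 0 \<and>
        (v1 - k1) * (v1 + inverse k1) = 0 \<and>
        (w0 - u0) * (w0 + inverse u0) = 0 \<and>
        (w1 - u1) * (w1 + inverse u1) = 0 \<and>
        w1 * v1 * v0 * w0 = 1 \<and>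
        c1 = w1 * v1 + v0 * w0 \<and>
        c2 = v1 * v0 + w0 * w1 \<and>
        c3 = v1 * w0 + inverse w0 * inverse v1))"

definition theta :: "params \<Rightarrow> tpt" where
  "theta t = (case t of (t1,t2,t3,t4) \<Rightarrow> (t1*t2, - t1/t2, - t3/t4, t3*t4, t1*t3))"

definition scomp :: "tpt \<Rightarrow> nat \<Rightarrow> complex" where
  "scomp s i = (case s of (s1,s2,s3,s4,d) \<Rightarrow>
     (if i = 0 then s1 else if i = 1 then s2 else if i = 2 then s3 else s4))"

text \<open>W(D4): signed permutations of the four coordinates with an even number of sign changes.\<close>
definition weylD4 :: "((nat \<Rightarrow> nat) \<times> nat set) set" where
  "weylD4 = {(\<sigma>, S). bij_betw \<sigma> {0..<4} {0..<4} \<and> S \<subseteq> {0..<4} \<and> even (card S)}"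

text \<open>Action of W(D4) on T = Spec C[P]: s_i = e^{eps_i}, delta = e^{(eps1+..+eps4)/2}.\<close>
definition weyl_act :: "(nat \<Rightarrow> nat) \<times> nat set \<Rightarrow> tpt \<Rightarrow> tpt" where
  "weyl_act w s = (case w of (\<sigma>, S) \<Rightarrow>
     let c = (\<lambda>i. if i \<in> S then inverse (scomp s (\<sigma> i)) else scomp s (\<sigma> i))
     in (c 0, c 1, c 2, c 3, snd (snd (snd (snd s))) * (\<Prod>i\<in>S. inverse (scomp s (\<sigma> i)))))"

end

theory Submission
  imports Defs
begin


definition singp :: "complex \<Rightarrow> complex \<Rightarrow> complex \<Rightarrow> complex \<Rightarrow> complex \<Rightarrow> complex \<Rightarrow> complex \<Rightarrow> bool" where
 "singp p0 p1 p2 p3 X Y Z \<longleftrightarrow> Y*Z - 2*X + p1 = 0 \<and> X*Z - 2*Y + p2 = 0 \<and> X*Y - 2*Z + p3 = 0 \<and>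
    X*Y*Z - X^2 - Y^2 - Z^2 + p1*X + p2*Y + p3*Z + p0 + 4 = 0"

definition sg :: "complex \<Rightarrow> complex \<Rightarrow> complex \<Rightarrow> complex \<Rightarrow> complex \<Rightarrow> complex \<Rightarrow> complex \<Rightarrow> bool" where
 "sg A B C D X Y Z \<longleftrightarrow> singp (A^2+B^2+C^2+D^2-A*B*C*D) (C*A+B*D) (D*C+A*B) (A*D+B*C) X Y Z"

lemma sg_F:
  assumes "sg A B C D X Y Z"
  shows "(X^2 - A*C*X - A^2 - C^2 - 4) * (X^2 - B*D*X - B^2 - D^2 - 4) = 0"
    and "(2*X - A*C) * (X^2 - B*D*X - B^2 - D^2 - 4) + (X^2 - A*C*X - A^2 - C^2 - 4) * (2*X - B*D) = 0"
  using assms unfolding sg_def singp_def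
  by algebra+



lemma cross_sing:
  fixes v0 v1 w0 w1 :: complex
  assumes "w1 * v1 * v0 * w0 = 1"
  shows "sg (bar v0) (bar v1) (bar w0) (bar w1) (w1 * v1+v0 * w0) (v1 * v0+w0 * w1) (v1 * w0+v0 * w1)"
proof -
  have nz: "v0 \<noteq> 0" "v1 \<noteq> 0" "w0 \<noteq> 0" "w1 \<noteq> 0" using assms by auto
  have w1: "w1 = 1/(v1 * v0 * w0)" using assms nz by (simp add: field_simps)
  show ?thesis unfolding sg_def singp_def bar_def w1 using nz
    by (simp add: field_simps) algebra?
qed

lemma sqA: assumes "x^2 = -1" shows "sg (2 * x) B C D (x * C) (x * B) (x * D)"
  using assms unfolding sg_def singp_def by algebra
lemma sqB: assumes "x^2 = -1" shows "sg A (2 * x) C D (x * D) (x * A) (x * C)"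
  using assms unfolding sg_def singp_def by algebra
lemma sqC: assumes "x^2 = -1" shows "sg A B (2 * x) D (x * A) (x * D) (x * B)"
  using assms unfolding sg_def singp_def by algebra
lemma sqD: assumes "x^2 = -1" shows "sg A B C (2 * x) (x * B) (x * C) (x * A)"
  using assms unfolding sg_def singp_def by algebra

lemma uniq:
  assumes "singp p0 p1 p2 p3 X Y Z" "singp p0 p1 p2 p3 X Y' Z'" "X^2 \<noteq> 4"
  shows "Y = Y' \<and> Z = Z'"
proof -
  have "(X^2-4) * Y = -(p3 * X+2 * p2)" "(X^2-4) * Y' = -(p3 * X+2 * p2)"
    using assms(1,2) unfolding singp_def by algebra+
  hence "Y = Y'" using assms(3) by (metis eq_iff_diff_eq_0 mult_cancel_left)
  moreover have "2 * Z = X * Y+p3" "2 * Z' = X * Y'+p3" using assms(1,2) unfolding singp_def by algebra+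
  ultimately have "2 * Z = 2 * Z'" by simp
  thus ?thesis using \<open>Y = Y'\<close> by simp
qed

lemma bar_alt: "a \<noteq> 0 \<Longrightarrow> v = a \<or> v = -1/a \<Longrightarrow> bar v = bar a"
proof -
  assume a: "a \<noteq> 0" "v = a \<or> v = -1/a"
  show ?thesis
  proof (cases "v = a")
    case False
    hence v: "v = -1/a" using a by auto
    show ?thesis unfolding bar_def v using a(1) by (simp add: field_simps)
  qed simp
qed

lemma bar_sq: "a \<noteq> 0 \<Longrightarrow> (bar a)^2 = -4 \<Longrightarrow> a^2 = -1"
proof -
  assume a: "a \<noteq> 0" "(bar a)^2 = -4"
  hence "(a^2+1)^2 = 0" unfolding bar_def by (simp add: field_simps) algebra
  hence "a^2 + 1 = 0" by simp
  thus ?thesis by (simp add: eq_neg_iff_add_eq_0)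
qed

lemma bar_i: "a^2 = -1 \<Longrightarrow> bar a = 2 * a"
proof -
  assume "a^2 = -1"
  hence "a * (-a) = 1" by (simp add: power2_eq_square)
  hence "inverse a = -a" by (rule inverse_unique)
  thus ?thesis unfolding bar_def by simp
qed

lemma F1_fact:
  fixes a c X :: complex
  assumes "a \<noteq> 0" "c \<noteq> 0"
  shows "X^2 - bar a * bar c * X - (bar a)^2 - (bar c)^2 - 4 = (X - (a * c + 1/(a * c))) * (X + (a/c + c/a))"
  using assms unfolding bar_def by (simp add: field_simps) algebra?



definition cross :: "complex \<Rightarrow> complex \<Rightarrow> complex \<Rightarrow> complex \<Rightarrow> complex \<Rightarrow> complex \<Rightarrow> complex \<Rightarrow> bool" where
 "cross a b c d X Y Z \<longleftrightarrow> (\<exists>v0 v1 w0 w1. (v0 = a \<or> v0 = -1/a) \<and> (v1 = b \<or> v1 = -1/b) \<and>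
    (w0 = c \<or> w0 = -1/c) \<and> (w1 = d \<or> w1 = -1/d) \<and> w1 * v1 * v0 * w0 = 1 \<and>
    X = w1 * v1 + v0 * w0 \<and> Y = v1 * v0 + w0 * w1 \<and> Z = v1 * w0 + v0 * w1)"

definition Concl :: "complex \<Rightarrow> complex \<Rightarrow> complex \<Rightarrow> complex \<Rightarrow> complex \<Rightarrow> complex \<Rightarrow> complex \<Rightarrow> bool" where
 "Concl a b c d X Y Z \<longleftrightarrow> cross a b c d X Y Z \<or>
   (a^2 = -1 \<and> X = a * bar c \<and> Y = a * bar b \<and> Z = a * bar d) \<or>
   (b^2 = -1 \<and> X = b * bar d \<and> Y = b * bar a \<and> Z = b * bar c) \<or>
   (c^2 = -1 \<and> X = c * bar a \<and> Y = c * bar d \<and> Z = c * bar b) \<or>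
   (d^2 = -1 \<and> X = d * bar b \<and> Y = d * bar c \<and> Z = d * bar a)"

lemma cross_sgb:
  assumes nz: "a \<noteq> 0" "b \<noteq> 0" "c \<noteq> 0" "d \<noteq> 0" and "cross a b c d X Y Z"
  shows "sg (bar a) (bar b) (bar c) (bar d) X Y Z"
proof -
  obtain v0 v1 w0 w1 where h: "(v0 = a \<or> v0 = -1/a)" "(v1 = b \<or> v1 = -1/b)"
    "(w0 = c \<or> w0 = -1/c)" "(w1 = d \<or> w1 = -1/d)" "w1 * v1 * v0 * w0 = 1"
    "X = w1 * v1 + v0 * w0" "Y = v1 * v0 + w0 * w1" "Z = v1 * w0 + v0 * w1"
    using assms(5) unfolding cross_def by blast
  have e: "bar v0 = bar a" "bar v1 = bar b" "bar w0 = bar c" "bar w1 = bar d"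
    using bar_alt[OF nz(1) h(1)] bar_alt[OF nz(2) h(2)] bar_alt[OF nz(3) h(3)] bar_alt[OF nz(4) h(4)] .
  show ?thesis using cross_sing[OF h(5)] unfolding e h(6-8)[symmetric] .
qed

lemma sgcaseA:
  assumes "a^2 = -1 \<and> X = a * bar c \<and> Y = a * bar b \<and> Z = a * bar d"
  shows "sg (bar a) (bar b) (bar c) (bar d) X Y Z"
proof -
  have h: "a^2 = -1" using assms by blast
  have e: "2 * a = bar a" using bar_i[OF h] by simp
  have "sg (bar a) (bar b) (bar c) (bar d) (a * bar c) (a * bar b) (a * bar d)"
    using sqA[OF h, of "bar b" "bar c" "bar d"] unfolding e .
  thus ?thesis using assms by blast
qed

lemma sgcaseB:
  assumes "b^2 = -1 \<and> X = b * bar d \<and> Y = b * bar a \<and> Z = b * bar c"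
  shows "sg (bar a) (bar b) (bar c) (bar d) X Y Z"
proof -
  have h: "b^2 = -1" using assms by blast
  have e: "2 * b = bar b" using bar_i[OF h] by simp
  have "sg (bar a) (bar b) (bar c) (bar d) (b * bar d) (b * bar a) (b * bar c)"
    using sqB[OF h, of "bar a" "bar c" "bar d"] unfolding e .
  thus ?thesis using assms by blast
qed

lemma sgcaseC:
  assumes "c^2 = -1 \<and> X = c * bar a \<and> Y = c * bar d \<and> Z = c * bar b"
  shows "sg (bar a) (bar b) (bar c) (bar d) X Y Z"
proof -
  have h: "c^2 = -1" using assms by blast
  have e: "2 * c = bar c" using bar_i[OF h] by simp
  have "sg (bar a) (bar b) (bar c) (bar d) (c * bar a) (c * bar d) (c * bar b)"
    using sqC[OF h, of "bar a" "bar b" "bar d"] unfolding e .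
  thus ?thesis using assms by blast
qed

lemma sgcaseD:
  assumes "d^2 = -1 \<and> X = d * bar b \<and> Y = d * bar c \<and> Z = d * bar a"
  shows "sg (bar a) (bar b) (bar c) (bar d) X Y Z"
proof -
  have h: "d^2 = -1" using assms by blast
  have e: "2 * d = bar d" using bar_i[OF h] by simp
  have "sg (bar a) (bar b) (bar c) (bar d) (d * bar b) (d * bar c) (d * bar a)"
    using sqD[OF h, of "bar a" "bar b" "bar c"] unfolding e .
  thus ?thesis using assms by blast
qed

lemma Concl_sgb:
  assumes nz: "a \<noteq> 0" "b \<noteq> 0" "c \<noteq> 0" "d \<noteq> 0" and "Concl a b c d X Y Z"
  shows "sg (bar a) (bar b) (bar c) (bar d) X Y Z"
  using assms(5) unfolding Concl_def
  apply -
  apply (erule disjE, erule cross_sgb[OF nz])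
  apply (erule disjE, erule sgcaseA)
  apply (erule disjE, erule sgcaseB)
  apply (erule disjE, erule sgcaseC)
  apply (erule sgcaseD)
  done

lemma cross_intro:
  assumes nz: "a \<noteq> 0" "b \<noteq> 0" "c \<noteq> 0" "d \<noteq> 0" and s: "sg (bar a) (bar b) (bar c) (bar d) X Y Z"
    and X4: "X^2 \<noteq> 4"
    and h: "(v0 = a \<or> v0 = -1/a)" "(v1 = b \<or> v1 = -1/b)"
    "(w0 = c \<or> w0 = -1/c)" "(w1 = d \<or> w1 = -1/d)" "w1 * v1 * v0 * w0 = 1"
    "X = w1 * v1 + v0 * w0"
  shows "Concl a b c d X Y Z"
proof -
  have c: "cross a b c d X (v1 * v0 + w0 * w1) (v1 * w0 + v0 * w1)"
    unfolding cross_def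
    apply (rule exI[of _ v0], rule exI[of _ v1], rule exI[of _ w0], rule exI[of _ w1])
    using h by blast
  have sg2: "sg (bar a) (bar b) (bar c) (bar d) X (v1 * v0 + w0 * w1) (v1 * w0 + v0 * w1)"
    by (rule cross_sgb[OF nz c])
  have "Y = v1 * v0 + w0 * w1 \<and> Z = v1 * w0 + v0 * w1"
    by (rule uniq[OF s[unfolded sg_def] sg2[unfolded sg_def] X4])
  thus ?thesis using c unfolding Concl_def by simp
qed

lemma sq_introA:
  assumes nz: "a \<noteq> 0" "b \<noteq> 0" "c \<noteq> 0" "d \<noteq> 0" and s: "sg (bar a) (bar b) (bar c) (bar d) X Y Z"
    and X4: "X^2 \<noteq> 4" and h: "a^2 = -1" "X = a * bar c"
  shows "Concl a b c d X Y Z"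
proof -
  have c: "Concl a b c d X (a * bar b) (a * bar d)" unfolding Concl_def using h by blast
  have sg2: "sg (bar a) (bar b) (bar c) (bar d) X (a * bar b) (a * bar d)" by (rule Concl_sgb[OF nz c])
  have "Y = a * bar b \<and> Z = a * bar d"
    by (rule uniq[OF s[unfolded sg_def] sg2[unfolded sg_def] X4])
  thus ?thesis using c by (elim conjE) simp
qed
lemma sq_introB:
  assumes nz: "a \<noteq> 0" "b \<noteq> 0" "c \<noteq> 0" "d \<noteq> 0" and s: "sg (bar a) (bar b) (bar c) (bar d) X Y Z"
    and X4: "X^2 \<noteq> 4" and h: "b^2 = -1" "X = b * bar d"
  shows "Concl a b c d X Y Z"
proof -
  have c: "Concl a b c d X (b * bar a) (b * bar c)" unfolding Concl_def using h by blast
  have sg2: "sg (bar a) (bar b) (bar c) (bar d) X (b * bar a) (b * bar c)" by (rule Concl_sgb[OF nz c])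
  have "Y = b * bar a \<and> Z = b * bar c"
    by (rule uniq[OF s[unfolded sg_def] sg2[unfolded sg_def] X4])
  thus ?thesis using c by (elim conjE) simp
qed
lemma sq_introC:
  assumes nz: "a \<noteq> 0" "b \<noteq> 0" "c \<noteq> 0" "d \<noteq> 0" and s: "sg (bar a) (bar b) (bar c) (bar d) X Y Z"
    and X4: "X^2 \<noteq> 4" and h: "c^2 = -1" "X = c * bar a"
  shows "Concl a b c d X Y Z"
proof -
  have c: "Concl a b c d X (c * bar d) (c * bar b)" unfolding Concl_def using h by blast
  have sg2: "sg (bar a) (bar b) (bar c) (bar d) X (c * bar d) (c * bar b)" by (rule Concl_sgb[OF nz c])
  have "Y = c * bar d \<and> Z = c * bar b"
    by (rule uniq[OF s[unfolded sg_def] sg2[unfolded sg_def] X4])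
  thus ?thesis using c by (elim conjE) simp
qed
lemma sq_introD:
  assumes nz: "a \<noteq> 0" "b \<noteq> 0" "c \<noteq> 0" "d \<noteq> 0" and s: "sg (bar a) (bar b) (bar c) (bar d) X Y Z"
    and X4: "X^2 \<noteq> 4" and h: "d^2 = -1" "X = d * bar b"
  shows "Concl a b c d X Y Z"
proof -
  have c: "Concl a b c d X (d * bar c) (d * bar a)" unfolding Concl_def using h by blast
  have sg2: "sg (bar a) (bar b) (bar c) (bar d) X (d * bar c) (d * bar a)" by (rule Concl_sgb[OF nz c])
  have "Y = d * bar c \<and> Z = d * bar a"
    by (rule uniq[OF s[unfolded sg_def] sg2[unfolded sg_def] X4])
  thus ?thesis using c by (elim conjE) simp
qed



lemma inv_sum_eq:
  fixes x y :: complex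
  assumes "x \<noteq> 0" "y \<noteq> 0" "x + 1/x = y + 1/y"
  shows "x = y \<or> x * y = 1"
proof -
  have e1: "x * y * (x + 1/x) = x*x*y + y" using assms by (simp add: field_simps)
  have e2: "x * y * (y + 1/y) = x*y*y + x" using assms by (simp add: field_simps)
  have "x*x*y + y = x*y*y + x" using e1 e2 assms(3) by simp
  hence "(x - y) * (x * y - 1) = 0" by algebra
  thus ?thesis by simp
qed

lemma c13:
  fixes a b c d X :: complex
  assumes nz: "a \<noteq> 0" "b \<noteq> 0" "c \<noteq> 0" "d \<noteq> 0" and s: "sg (bar a) (bar b) (bar c) (bar d) X Y Z"
    and X4: "X^2 \<noteq> 4" and h1: "X = a * c + 1/(a * c)" and h2: "X = b * d + 1/(b * d)"
  shows "Concl a b c d X Y Z"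
proof -
  have "a * c = b * d \<or> (a * c) * (b * d) = 1" using inv_sum_eq[of "a*c" "b*d"] h1 h2 nz by simp
  thus ?thesis
  proof
    assume e: "a * c * (b * d) = 1"
    show ?thesis
    proof (rule cross_intro[OF nz s X4, of a b c d])
      show "d * b * a * c = 1" using e by (simp add: ac_simps)
      have "1/(a * c) = b * d" using e nz by (simp add: field_simps ac_simps)
      thus "X = d * b + a * c" using h1 by (simp add: ac_simps)
    qed auto
  next
    assume e: "a * c = b * d"
    show ?thesis
    proof (rule cross_intro[OF nz s X4, of a "-1/b" c "-1/d"])
      show "(-1/d) * (-1/b) * a * c = 1" using e nz by (simp add: field_simps)
      have "1/(a * c) = (-1/d) * (-1/b)" using e nz by (simp add: field_simps)
      thus "X = (-1/d) * (-1/b) + a * c" using h1 by (simp add: ac_simps)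
    qed auto
  qed
qed

lemma c14:
  fixes a b c d X :: complex
  assumes nz: "a \<noteq> 0" "b \<noteq> 0" "c \<noteq> 0" "d \<noteq> 0" and s: "sg (bar a) (bar b) (bar c) (bar d) X Y Z"
    and X4: "X^2 \<noteq> 4" and h1: "X = a * c + 1/(a * c)" and h2: "X = (-b/d) + 1/(-b/d)"
  shows "Concl a b c d X Y Z"
proof -
  have "a * c = -b/d \<or> (a * c) * (-b/d) = 1" using inv_sum_eq[of "a*c" "-b/d"] h1 h2 nz by simp
  thus ?thesis
  proof
    assume e: "a * c = -b/d"
    show ?thesis
    proof (rule cross_intro[OF nz s X4, of a "-1/b" c d])
      show "d * (-1/b) * a * c = 1" using e nz by (simp add: field_simps)
      have "1/(a * c) = d * (-1/b)" using e nz by (simp add: field_simps)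
      thus "X = d * (-1/b) + a * c" using h1 by (simp add: ac_simps)
    qed auto
  next
    assume e: "(a * c) * (-b/d) = 1"
    show ?thesis
    proof (rule cross_intro[OF nz s X4, of a b c "-1/d"])
      show "(-1/d) * b * a * c = 1" using e nz by (simp add: field_simps)
      have "1/(a * c) = (-1/d) * b" using e nz by (simp add: field_simps)
      thus "X = (-1/d) * b + a * c" using h1 by (simp add: ac_simps)
    qed auto
  qed
qed

lemma c23:
  fixes a b c d X :: complex
  assumes nz: "a \<noteq> 0" "b \<noteq> 0" "c \<noteq> 0" "d \<noteq> 0" and s: "sg (bar a) (bar b) (bar c) (bar d) X Y Z"
    and X4: "X^2 \<noteq> 4" and h1: "X = (-a/c) + 1/(-a/c)" and h2: "X = b * d + 1/(b * d)"
  shows "Concl a b c d X Y Z"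
proof -
  have "b * d = -a/c \<or> (b * d) * (-a/c) = 1" using inv_sum_eq[of "b*d" "-a/c"] h1 h2 nz by simp
  thus ?thesis
  proof
    assume e: "b * d = -a/c"
    show ?thesis
    proof (rule cross_intro[OF nz s X4, of "-1/a" b c d])
      show "d * b * (-1/a) * c = 1" using e nz by (simp add: field_simps)
      have "1/(b * d) = (-1/a) * c" using e nz by (simp add: field_simps)
      thus "X = d * b + (-1/a) * c" using h2 by (simp add: ac_simps)
    qed auto
  next
    assume e: "(b * d) * (-a/c) = 1"
    show ?thesis
    proof (rule cross_intro[OF nz s X4, of a b "-1/c" d])
      show "d * b * a * (-1/c) = 1" using e nz by (simp add: field_simps)
      have "1/(b * d) = a * (-1/c)" using e nz by (simp add: field_simps)
      thus "X = d * b + a * (-1/c)" using h2 by (simp add: ac_simps)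
    qed auto
  qed
qed

lemma c24:
  fixes a b c d X :: complex
  assumes nz: "a \<noteq> 0" "b \<noteq> 0" "c \<noteq> 0" "d \<noteq> 0" and s: "sg (bar a) (bar b) (bar c) (bar d) X Y Z"
    and X4: "X^2 \<noteq> 4" and h1: "X = (-a/c) + 1/(-a/c)" and h2: "X = (-b/d) + 1/(-b/d)"
  shows "Concl a b c d X Y Z"
proof -
  have "-a/c = -b/d \<or> (-a/c) * (-b/d) = 1" using inv_sum_eq[of "-a/c" "-b/d"] h1 h2 nz by simp
  thus ?thesis
  proof
    assume e: "-a/c = -b/d"
    show ?thesis
    proof (rule cross_intro[OF nz s X4, of a "-1/b" "-1/c" d])
      show "d * (-1/b) * a * (-1/c) = 1" using e nz by (simp add: field_simps)
      have "1/(-a/c) = d * (-1/b)" using e nz by (simp add: field_simps)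
      thus "X = d * (-1/b) + a * (-1/c)" using h1 by (simp add: field_simps)
    qed auto
  next
    assume e: "(-a/c) * (-b/d) = 1"
    show ?thesis
    proof (rule cross_intro[OF nz s X4, of a b "-1/c" "-1/d"])
      show "(-1/d) * b * a * (-1/c) = 1" using e nz by (simp add: field_simps)
      have "1/(-a/c) = (-1/d) * b" using e nz by (simp add: field_simps)
      thus "X = (-1/d) * b + a * (-1/c)" using h1 by (simp add: field_simps)
    qed auto
  qed
qed



lemma pair_lemma:
  fixes f1 f2 g1 g2 :: complex
  assumes "f1 * f2 = 0" "g1 * f2 + f1 * g2 = 0"
  shows "(f1 = 0 \<and> g1 = 0) \<or> (f2 = 0 \<and> g2 = 0) \<or> (f1 = 0 \<and> f2 = 0)"
  using assms by auto

lemma F_roots: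
  fixes a c X :: complex
  assumes "a \<noteq> 0" "c \<noteq> 0" "X^2 - bar a * bar c * X - (bar a)^2 - (bar c)^2 - 4 = 0"
  shows "X = a * c + 1/(a * c) \<or> X = (-a/c) + 1/(-a/c)"
proof -
  have "(X - (a * c + 1/(a * c))) * (X + (a/c + c/a)) = 0" using F1_fact[OF assms(1,2), of X] assms(3) by simp
  moreover have "(-a/c) + 1/(-a/c) = -(a/c + c/a)" using assms by (simp add: field_simps)
  moreover have "X + (a/c + c/a) = 0 \<Longrightarrow> X = -(a/c + c/a)" by (metis add_eq_0_iff minus_minus)
  ultimately show ?thesis by auto
qed

lemma MX:
  fixes a b c d X :: complex
  assumes nz: "a \<noteq> 0" "b \<noteq> 0" "c \<noteq> 0" "d \<noteq> 0" and s: "sg (bar a) (bar b) (bar c) (bar d) X Y Z"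
    and X4: "X^2 \<noteq> 4"
  shows "Concl a b c d X Y Z"
proof -
  note F = sg_F[OF s]
  define f1 where "f1 = X^2 - bar a * bar c * X - (bar a)^2 - (bar c)^2 - 4"
  define f2 where "f2 = X^2 - bar b * bar d * X - (bar b)^2 - (bar d)^2 - 4"
  define g1 where "g1 = 2 * X - bar a * bar c"
  define g2 where "g2 = 2 * X - bar b * bar d"
  have "f1 * f2 = 0" "g1 * f2 + f1 * g2 = 0" using F unfolding f1_def f2_def g1_def g2_def by simp_all
  hence "(f1 = 0 \<and> g1 = 0) \<or> (f2 = 0 \<and> g2 = 0) \<or> (f1 = 0 \<and> f2 = 0)" by (rule pair_lemma)
  moreover
  { assume h: "f1 = 0" "g1 = 0"
    have "((bar a)^2 + 4) * ((bar c)^2 + 4) = 0" using h unfolding f1_def g1_def by algebra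
    hence "(bar a)^2 = -4 \<or> (bar c)^2 = -4" by (simp add: eq_neg_iff_add_eq_0)
    hence ?thesis
    proof
      assume "(bar a)^2 = -4"
      hence a: "a^2 = -1" using bar_sq nz by blast
      have "2 * X = 2 * a * bar c" using h(2) bar_i[OF a] unfolding g1_def by simp
      hence "X = a * bar c" by simp
      thus ?thesis using sq_introA[OF nz s X4 a] by blast
    next
      assume "(bar c)^2 = -4"
      hence a: "c^2 = -1" using bar_sq nz by blast
      have "2 * X = 2 * c * bar a" using h(2) bar_i[OF a] unfolding g1_def by (simp add: ac_simps)
      hence "X = c * bar a" by simp
      thus ?thesis using sq_introC[OF nz s X4 a] by blast
    qed }
  moreover
  { assume h: "f2 = 0" "g2 = 0"
    have "((bar b)^2 + 4) * ((bar d)^2 + 4) = 0" using h unfolding f2_def g2_def by algebra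
    hence "(bar b)^2 = -4 \<or> (bar d)^2 = -4" by (simp add: eq_neg_iff_add_eq_0)
    hence ?thesis
    proof
      assume "(bar b)^2 = -4"
      hence a: "b^2 = -1" using bar_sq nz by blast
      have "2 * X = 2 * b * bar d" using h(2) bar_i[OF a] unfolding g2_def by simp
      hence "X = b * bar d" by simp
      thus ?thesis using sq_introB[OF nz s X4 a] by blast
    next
      assume "(bar d)^2 = -4"
      hence a: "d^2 = -1" using bar_sq nz by blast
      have "2 * X = 2 * d * bar b" using h(2) bar_i[OF a] unfolding g2_def by (simp add: ac_simps)
      hence "X = d * bar b" by simp
      thus ?thesis using sq_introD[OF nz s X4 a] by blast
    qed }
  moreover
  { assume h: "f1 = 0" "f2 = 0"
    have r1: "X = a * c + 1/(a * c) \<or> X = (-a/c) + 1/(-a/c)"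
      using F_roots[OF nz(1,3)] h(1) unfolding f1_def by blast
    have r2: "X = b * d + 1/(b * d) \<or> X = (-b/d) + 1/(-b/d)"
      using F_roots[OF nz(2,4)] h(2) unfolding f2_def by blast
    have ?thesis using r1 r2 c13[OF nz s X4] c14[OF nz s X4] c23[OF nz s X4] c24[OF nz s X4] by blast }
  ultimately show ?thesis by blast
qed



lemma L1:
  fixes A B C D :: complex
  assumes e1: "C * A + B * D = 0" and e2: "D * C + A * B = 0" and e3: "A * D + B * C = 0"
    and e0: "A^2 + B^2 + C^2 + D^2 - A * B * C * D = 0"
  shows "(A = 0 \<and> B = 0 \<and> C = 0 \<and> D = 0) \<or> (A^2 = -4 \<and> B = -A \<and> C = -A \<and> D = -A) \<or>
    (B^2 = -4 \<and> A = -B \<and> C = -B \<and> D = -B) \<or> (C^2 = -4 \<and> A = -C \<and> B = -C \<and> D = -C) \<or>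
    (D^2 = -4 \<and> A = -D \<and> B = -D \<and> C = -D)"
proof -
  have f1: "(A + D) * (B + C) = 0" using e1 e2 by algebra
  have f2: "(A - D) * (B - C) = 0" using e1 e2 by algebra
  have f3: "(A + B) * (C + D) = 0" using e1 e3 by algebra
  have q: "\<And>x::complex. x^2 * (x^2 + 4) = 0 \<Longrightarrow> x = 0 \<or> x^2 = -4"
    by (simp add: eq_neg_iff_add_eq_0)
  from f1 have "A + D = 0 \<or> B + C = 0" by simp
  moreover from f2 have "A - D = 0 \<or> B - C = 0" by simp
  ultimately consider "A + D = 0" "A - D = 0" | "A + D = 0" "B - C = 0" | "B + C = 0" "A - D = 0" | "B + C = 0" "B - C = 0"
    by blast
  then show ?thesis
  proof cases
    case 1
    have D: "D = -A" using 1 by algebra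
    have A0: "A = 0" using 1 D by simp
    have D0: "D = 0" using A0 D by simp
    have "B * C = 0" using e3 A0 D0 by simp
    moreover have "B^2 + C^2 = 0" using e0 A0 D0 by simp
    ultimately have "B = 0 \<and> C = 0" by (auto simp: power2_eq_square)
    thus ?thesis using A0 D0 by simp
  next
    case 4
    have C: "C = -B" using 4 by algebra
    have B0: "B = 0" using 4 C by simp
    have C0: "C = 0" using B0 C by simp
    have "A * D = 0" using e3 B0 C0 by simp
    moreover have "A^2 + D^2 = 0" using e0 B0 C0 by simp
    ultimately have "A = 0 \<and> D = 0" by (auto simp: power2_eq_square)
    thus ?thesis using B0 C0 by simp
  next
    case 2
    have D: "D = -A" using 2 by algebra
    have C: "C = B" using 2 by algebra
    have "(A + B) * (B - A) = 0" using f3 C D by simp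
    hence "B = -A \<or> B = A" by (auto simp: eq_neg_iff_add_eq_0 add.commute)
    thus ?thesis
    proof
      assume B: "B = -A"
      have "A^2 * (A^2 + 4) = 0" using e0 B C D by algebra
      hence "A = 0 \<or> A^2 = -4" by (rule q)
      thus ?thesis using B C D by auto
    next
      assume B: "B = A"
      have "A^2 * (A^2 + 4) = 0" using e0 B C D by algebra
      hence "A = 0 \<or> A^2 = -4" by (rule q)
      thus ?thesis using B C D by auto
    qed
  next
    case 3
    have C: "C = -B" using 3 by algebra
    have D: "D = A" using 3 by algebra
    have "(A + B) * (A - B) = 0" using f3 C D by simp
    hence "B = -A \<or> B = A" by (auto simp: eq_neg_iff_add_eq_0 add.commute)
    thus ?thesis
    proof
      assume B: "B = -A"
      have "A^2 * (A^2 + 4) = 0" using e0 B C D by algebra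
      hence "A = 0 \<or> A^2 = -4" by (rule q)
      thus ?thesis using B C D by auto
    next
      assume B: "B = A"
      have "A^2 * (A^2 + 4) = 0" using e0 B C D by algebra
      hence "A = 0 \<or> A^2 = -4" by (rule q)
      thus ?thesis using B C D by auto
    qed
  qed
qed

lemma Hlem:
  fixes A X :: complex
  assumes "A * X + A^2 = -8" "3 * A^2 + X^2 - A^3 * X = -32"
  shows "X = A \<and> A^2 = -4"
proof -
  have "(A^2 + 4)^3 = 0" using assms by algebra
  hence A2: "A^2 = -4" by (simp add: eq_neg_iff_add_eq_0)
  hence "A * X = A * A" using assms(1) by algebra
  moreover have "A \<noteq> 0" using A2 by auto
  ultimately show ?thesis using A2 by simp
qed

lemma L2:
  fixes A B C D :: complex
  assumes e1: "C * A + B * D = -8" and e2: "D * C + A * B = -8" and e3: "A * D + B * C = -8"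
    and e0: "A^2 + B^2 + C^2 + D^2 - A * B * C * D = -32"
  shows "A = B \<and> A = C \<and> A = D \<and> A^2 = -4"
proof -
  have f1: "(A - D) * (C - B) = 0" using e1 e2 by algebra
  have f2: "(A - B) * (C - D) = 0" using e1 e3 by algebra
  have f3: "(A - C) * (B - D) = 0" using e2 e3 by algebra
  from f1 have "A = D \<or> B = C" by auto
  thus ?thesis
  proof
    assume D: "A = D"
    from f2 have "A = B \<or> C = D" by auto
    thus ?thesis
    proof
      assume B: "A = B"
      have "A * C + A^2 = -8" "3 * A^2 + C^2 - A^3 * C = -32" using e1 e0 B D by algebra+
      thus ?thesis using Hlem B D by metis
    next
      assume C: "C = D"
      have "A * B + A^2 = -8" "3 * A^2 + B^2 - A^3 * B = -32" using e2 e0 C D by algebra+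
      thus ?thesis using Hlem C D by metis
    qed
  next
    assume C: "B = C"
    from f2 have "A = B \<or> C = D" by auto
    thus ?thesis
    proof
      assume B: "A = B"
      have "A * D + A^2 = -8" "3 * A^2 + D^2 - A^3 * D = -32" using e3 e0 B C by algebra+
      thus ?thesis using Hlem B C by metis
    next
      assume D: "C = D"
      have "B * A + B^2 = -8" "3 * B^2 + A^2 - B^3 * A = -32" using e1 e0 C D by algebra+
      thus ?thesis using Hlem[of B A] C D by auto
    qed
  qed
qed



lemma sg_swapBC: "sg A B C D X Y Z \<Longrightarrow> sg A C B D Y X Z"
  unfolding sg_def singp_def by (elim conjE, intro conjI; algebra)
lemma sg_swapCD: "sg A B C D X Y Z \<Longrightarrow> sg A B D C Z Y X"
  unfolding sg_def singp_def by (elim conjE, intro conjI; algebra)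
lemma sg_flipAC: "sg A B C D X Y Z \<Longrightarrow> sg (-A) B (-C) D X (-Y) (-Z)"
  unfolding sg_def singp_def by (elim conjE, intro conjI; algebra)
lemma sg_flipAB: "sg A B C D X Y Z \<Longrightarrow> sg (-A) (-B) C D (-X) Y (-Z)"
  unfolding sg_def singp_def by (elim conjE, intro conjI; algebra)

lemma bar_neg: "bar (-a) = - bar a" unfolding bar_def by simp

lemma Concl_swapBC:
  assumes "Concl a c b d Y X Z" shows "Concl a b c d X Y Z"
proof -
  { assume "cross a c b d Y X Z"
    then obtain v0 v1 w0 w1 where h: "(v0 = a \<or> v0 = -1/a)" "(v1 = c \<or> v1 = -1/c)"
      "(w0 = b \<or> w0 = -1/b)" "(w1 = d \<or> w1 = -1/d)" "w1 * v1 * v0 * w0 = 1"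
      "Y = w1 * v1 + v0 * w0" "X = v1 * v0 + w0 * w1" "Z = v1 * w0 + v0 * w1"
      unfolding cross_def by blast
    have "cross a b c d X Y Z" unfolding cross_def
      apply (rule exI[of _ v0], rule exI[of _ w0], rule exI[of _ v1], rule exI[of _ w1])
      using h by (simp add: ac_simps)
  }
  thus ?thesis using assms unfolding Concl_def by blast
qed

lemma Concl_swapCD:
  assumes "Concl a b d c Z Y X" shows "Concl a b c d X Y Z"
proof -
  { assume "cross a b d c Z Y X"
    then obtain v0 v1 w0 w1 where h: "(v0 = a \<or> v0 = -1/a)" "(v1 = b \<or> v1 = -1/b)"
      "(w0 = d \<or> w0 = -1/d)" "(w1 = c \<or> w1 = -1/c)" "w1 * v1 * v0 * w0 = 1"
      "Z = w1 * v1 + v0 * w0" "Y = v1 * v0 + w0 * w1" "X = v1 * w0 + v0 * w1"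
      unfolding cross_def by blast
    have "cross a b c d X Y Z" unfolding cross_def
      apply (rule exI[of _ v0], rule exI[of _ v1], rule exI[of _ w1], rule exI[of _ w0])
      using h by (simp add: ac_simps)
  }
  thus ?thesis using assms unfolding Concl_def by blast
qed

lemma Concl_flipAC:
  assumes "Concl (-a) b (-c) d X (-Y) (-Z)" shows "Concl a b c d X Y Z"
proof -
  { assume "cross (-a) b (-c) d X (-Y) (-Z)"
    then obtain v0 v1 w0 w1 where h: "(v0 = -a \<or> v0 = -1/(-a))" "(v1 = b \<or> v1 = -1/b)"
      "(w0 = -c \<or> w0 = -1/(-c))" "(w1 = d \<or> w1 = -1/d)" "w1 * v1 * v0 * w0 = 1"
      "X = w1 * v1 + v0 * w0" "-Y = v1 * v0 + w0 * w1" "-Z = v1 * w0 + v0 * w1"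
      unfolding cross_def by blast
    have "Y = v1 * (-v0) + (-w0) * w1" "Z = v1 * (-w0) + (-v0) * w1"
      using h(7,8) by (simp_all add: minus_equation_iff[of Y] minus_equation_iff[of Z])
    hence "cross a b c d X Y Z" unfolding cross_def
      apply -
      apply (rule exI[of _ "-v0"], rule exI[of _ v1], rule exI[of _ "-w0"], rule exI[of _ w1])
      using h by auto
  }
  moreover have "(-a)^2 = a^2" "(-c)^2 = c^2" by simp_all
  ultimately show ?thesis using assms unfolding Concl_def bar_neg by auto
qed

lemma Concl_flipAB:
  assumes "Concl (-a) (-b) c d (-X) Y (-Z)" shows "Concl a b c d X Y Z"
proof -
  { assume "cross (-a) (-b) c d (-X) Y (-Z)"
    then obtain v0 v1 w0 w1 where h: "(v0 = -a \<or> v0 = -1/(-a))" "(v1 = -b \<or> v1 = -1/(-b))"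
      "(w0 = c \<or> w0 = -1/c)" "(w1 = d \<or> w1 = -1/d)" "w1 * v1 * v0 * w0 = 1"
      "-X = w1 * v1 + v0 * w0" "Y = v1 * v0 + w0 * w1" "-Z = v1 * w0 + v0 * w1"
      unfolding cross_def by blast
    have "X = w1 * (-v1) + (-v0) * w0" "Z = (-v1) * w0 + (-v0) * w1"
      using h(6,8) by (simp_all add: minus_equation_iff[of X] minus_equation_iff[of Z])
    hence "cross a b c d X Y Z" unfolding cross_def
      apply -
      apply (rule exI[of _ "-v0"], rule exI[of _ "-v1"], rule exI[of _ w0], rule exI[of _ w1])
      using h by auto
  }
  moreover have "(-a)^2 = a^2" "(-b)^2 = b^2" by simp_all
  ultimately show ?thesis using assms unfolding Concl_def bar_neg by auto
qed



lemma bar0: "a \<noteq> 0 \<Longrightarrow> bar a = 0 \<Longrightarrow> 1 = a \<or> 1 = -1/a"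
proof -
  assume a: "a \<noteq> 0" "bar a = 0"
  hence "a * a = 1" unfolding bar_def by (simp add: field_simps)
  hence "(a - 1) * (a + 1) = 0" by algebra
  hence "a = 1 \<or> a = -1" by (auto simp: eq_neg_iff_add_eq_0)
  thus ?thesis by auto
qed

lemma Bse1:
  assumes nz: "a \<noteq> 0" "b \<noteq> 0" "c \<noteq> 0" "d \<noteq> 0" and s: "sg (bar a) (bar b) (bar c) (bar d) 2 2 2"
  shows "Concl a b c d 2 2 2"
proof -
  define A where "A = bar a"
  define B where "B = bar b"
  define C where "C = bar c"
  define D where "D = bar d"
  have s': "sg A B C D 2 2 2" using s unfolding A_def B_def C_def D_def .
  have e: "C * A + B * D = 0" "D * C + A * B = 0" "A * D + B * C = 0"
    "A^2 + B^2 + C^2 + D^2 - A * B * C * D = 0"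
    using s' unfolding sg_def singp_def by algebra+
  note L = L1[OF e]
  show ?thesis
  proof (rule disjE[OF L])
    assume z: "A = 0 \<and> B = 0 \<and> C = 0 \<and> D = 0"
    have "cross a b c d 2 2 2" unfolding cross_def
      apply (rule exI[of _ 1], rule exI[of _ 1], rule exI[of _ 1], rule exI[of _ 1])
      using bar0[OF nz(1)] bar0[OF nz(2)] bar0[OF nz(3)] bar0[OF nz(4)] z
      unfolding A_def B_def C_def D_def by auto
    thus ?thesis unfolding Concl_def by blast
  next
    assume r: "(A^2 = -4 \<and> B = -A \<and> C = -A \<and> D = -A) \<or>
    (B^2 = -4 \<and> A = -B \<and> C = -B \<and> D = -B) \<or> (C^2 = -4 \<and> A = -C \<and> B = -C \<and> D = -C) \<or>
    (D^2 = -4 \<and> A = -D \<and> B = -D \<and> C = -D)"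
    show ?thesis
    proof (rule disjE[OF r])
      assume h: "A^2 = -4 \<and> B = -A \<and> C = -A \<and> D = -A"
      have x: "a^2 = -1" using bar_sq[OF nz(1)] h unfolding A_def by blast
      have "A = 2 * a" using bar_i[OF x] unfolding A_def .
      hence "a * bar c = 2 \<and> a * bar b = 2 \<and> a * bar d = 2" using h x unfolding A_def B_def C_def D_def
        by (intro conjI; algebra)
      thus ?thesis unfolding Concl_def using x by auto
    next
      assume r: "(B^2 = -4 \<and> A = -B \<and> C = -B \<and> D = -B) \<or> (C^2 = -4 \<and> A = -C \<and> B = -C \<and> D = -C) \<or>
        (D^2 = -4 \<and> A = -D \<and> B = -D \<and> C = -D)"
      show ?thesis
      proof (rule disjE[OF r])
        assume h: "B^2 = -4 \<and> A = -B \<and> C = -B \<and> D = -B"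
        have x: "b^2 = -1" using bar_sq[OF nz(2)] h unfolding B_def by blast
        have "B = 2 * b" using bar_i[OF x] unfolding B_def .
        hence "b * bar d = 2 \<and> b * bar a = 2 \<and> b * bar c = 2" using h x unfolding A_def B_def C_def D_def
          by (intro conjI; algebra)
        thus ?thesis unfolding Concl_def using x by auto
      next
        assume r: "(C^2 = -4 \<and> A = -C \<and> B = -C \<and> D = -C) \<or> (D^2 = -4 \<and> A = -D \<and> B = -D \<and> C = -D)"
        show ?thesis
        proof (rule disjE[OF r])
          assume h: "C^2 = -4 \<and> A = -C \<and> B = -C \<and> D = -C"
          have x: "c^2 = -1" using bar_sq[OF nz(3)] h unfolding C_def by blast
          have "C = 2 * c" using bar_i[OF x] unfolding C_def .
          hence "c * bar a = 2 \<and> c * bar d = 2 \<and> c * bar b = 2" using h x unfolding A_def B_def C_def D_def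
            by (intro conjI; algebra)
          thus ?thesis unfolding Concl_def using x by auto
        next
          assume h: "D^2 = -4 \<and> A = -D \<and> B = -D \<and> C = -D"
          have x: "d^2 = -1" using bar_sq[OF nz(4)] h unfolding D_def by blast
          have "D = 2 * d" using bar_i[OF x] unfolding D_def .
          hence "d * bar b = 2 \<and> d * bar c = 2 \<and> d * bar a = 2" using h x unfolding A_def B_def C_def D_def
            by (intro conjI; algebra)
          thus ?thesis unfolding Concl_def using x by auto
        qed
      qed
    qed
  qed
qed

lemma Bse2:
  assumes nz: "a \<noteq> 0" "b \<noteq> 0" "c \<noteq> 0" "d \<noteq> 0" and s: "sg (bar a) (bar b) (bar c) (bar d) (-2) (-2) (-2)"
  shows "Concl a b c d (-2) (-2) (-2)"
proof -
  define A where "A = bar a"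
  define B where "B = bar b"
  define C where "C = bar c"
  define D where "D = bar d"
  have s': "sg A B C D (-2) (-2) (-2)" using s unfolding A_def B_def C_def D_def .
  have e: "C * A + B * D = -8" "D * C + A * B = -8" "A * D + B * C = -8"
    "A^2 + B^2 + C^2 + D^2 - A * B * C * D = -32"
    using s' unfolding sg_def singp_def by algebra+
  note h = L2[OF e]
  have x: "a^2 = -1" using bar_sq[OF nz(1)] h unfolding A_def by blast
  have "A = 2 * a" using bar_i[OF x] unfolding A_def .
  hence "a * bar c = -2 \<and> a * bar b = -2 \<and> a * bar d = -2" using h x unfolding A_def B_def C_def D_def
    by (intro conjI; algebra)
  thus ?thesis unfolding Concl_def using x by auto
qed

lemma Bse:
  assumes nz: "a \<noteq> 0" "b \<noteq> 0" "c \<noteq> 0" "d \<noteq> 0" and s: "sg (bar a) (bar b) (bar c) (bar d) X X X"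
    and X: "X = 2 \<or> X = -2"
  shows "Concl a b c d X X X"
  using X Bse1[OF nz] Bse2[OF nz] s by auto

lemma M4:
  assumes nz: "a \<noteq> 0" "b \<noteq> 0" "c \<noteq> 0" "d \<noteq> 0" and s: "sg (bar a) (bar b) (bar c) (bar d) X Y Z"
    and X: "X = 2 \<or> X = -2" and Y: "Y = 2 \<or> Y = -2" and Z: "Z = 2 \<or> Z = -2"
  shows "Concl a b c d X Y Z"
proof -
  have nz': "-a \<noteq> 0" "-b \<noteq> 0" "-c \<noteq> 0" "-d \<noteq> 0" using nz by auto
  consider "Y = X" "Z = X" | "Y = -X" "Z = -X" | "Y = X" "Z = -X" | "Y = -X" "Z = X"
    using X Y Z by auto
  then show ?thesis
  proof cases
    case 1 thus ?thesis using Bse[OF nz] s X by simp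
  next
    case 2
    have "sg (bar (-a)) (bar b) (bar (-c)) (bar d) X X X"
      using sg_flipAC[OF s] 2 unfolding bar_neg by simp
    hence "Concl (-a) b (-c) d X X X" using Bse[OF nz'(1) nz(2) nz'(3) nz(4)] X by blast
    thus ?thesis using Concl_flipAC[of a b c d X Y Z] 2 by simp
  next
    case 4
    have "sg (bar (-a)) (bar (-b)) (bar c) (bar d) Y Y Y"
      using sg_flipAB[OF s] 4 unfolding bar_neg by simp
    hence "Concl (-a) (-b) c d Y Y Y" using Bse[OF nz'(1) nz'(2) nz(3) nz(4)] Y by blast
    thus ?thesis using Concl_flipAB[of a b c d X Y Z] 4 by simp
  next
    case 3
    have "sg (bar a) (bar (-b)) (bar (-c)) (bar d) Z Z Z"
      using sg_flipAC[OF sg_flipAB[OF s]] 3 unfolding bar_neg by simp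
    hence c: "Concl a (-b) (-c) d Z Z Z" using Bse[OF nz(1) nz'(2) nz'(3) nz(4)] Z by blast
    have "Concl (-a) (-b) c d (-X) Y (-Z)"
      using Concl_flipAC[of "-a" "-b" c d "-X" Y "-Z"] c 3 by simp
    thus ?thesis using Concl_flipAB[of a b c d X Y Z] by simp
  qed
qed

lemma Mall:
  assumes nz: "a \<noteq> 0" "b \<noteq> 0" "c \<noteq> 0" "d \<noteq> 0" and s: "sg (bar a) (bar b) (bar c) (bar d) X Y Z"
  shows "Concl a b c d X Y Z"
proof -
  have sq: "\<And>x::complex. x^2 = 4 \<Longrightarrow> x = 2 \<or> x = -2"
  proof -
    fix x :: complex assume "x^2 = 4"
    moreover have "(x - 2) * (x + 2) = x^2 - 4" by (simp add: algebra_simps power2_eq_square)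
    ultimately have "(x - 2) * (x + 2) = 0" by simp
    thus "x = 2 \<or> x = -2" by (auto simp: eq_neg_iff_add_eq_0)
  qed
  show ?thesis
  proof (cases "X^2 = 4")
    case False thus ?thesis using MX[OF nz s] by blast
  next
    case XX: True
    show ?thesis
    proof (cases "Y^2 = 4")
      case False
      have "Concl a c b d Y X Z" using MX[OF nz(1,3,2,4) sg_swapBC[OF s] False] .
      thus ?thesis by (rule Concl_swapBC)
    next
      case YY: True
      show ?thesis
      proof (cases "Z^2 = 4")
        case False
        have "Concl a b d c Z Y X" using MX[OF nz(1,2,4,3) sg_swapCD[OF s] False] .
        thus ?thesis by (rule Concl_swapCD)
      next
        case True
        thus ?thesis using M4[OF nz s] sq XX YY by blast
      qed
    qed
  qed
qed



lemma sing_iff: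
  "singular_point (k0,k1,u0,u1) (X,Y,Z) \<longleftrightarrow> sg (bar k0) (bar k1) (bar u0) (bar u1) X Y Z"
proof -
  define p1 where "p1 = bar u0 * bar k0 + bar k1 * bar u1"
  define p2 where "p2 = bar u1 * bar u0 + bar k0 * bar k1"
  define p3 where "p3 = bar k0 * bar u1 + bar k1 * bar u0"
  define p0 where "p0 = (bar k0)^2 + (bar k1)^2 + (bar u0)^2 + (bar u1)^2 - bar k0 * bar k1 * bar u0 * bar u1"
  have R: "\<And>x1 x2 x3. Rpoly (k0,k1,u0,u1) x1 x2 x3 = x1 * x2 * x3 - x1^2 - x2^2 - x3^2 + p1 * x1 + p2 * x2 + p3 * x3 + p0 + 4"
    unfolding Rpoly_def p0_def p1_def p2_def p3_def Let_def by simp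
  have d1: "((\<lambda>x. Rpoly (k0,k1,u0,u1) x Y Z) has_field_derivative (Y * Z - 2 * X + p1)) (at X)"
    unfolding R by (rule derivative_eq_intros refl | simp)+
  have d2: "((\<lambda>x. Rpoly (k0,k1,u0,u1) X x Z) has_field_derivative (X * Z - 2 * Y + p2)) (at Y)"
    unfolding R by (rule derivative_eq_intros refl | simp)+
  have d3: "((\<lambda>x. Rpoly (k0,k1,u0,u1) X Y x) has_field_derivative (X * Y - 2 * Z + p3)) (at Z)"
    unfolding R by (rule derivative_eq_intros refl | simp)+
  have "singular_point (k0,k1,u0,u1) (X,Y,Z) \<longleftrightarrow> Rpoly (k0,k1,u0,u1) X Y Z = 0 \<and>
     deriv (\<lambda>x. Rpoly (k0,k1,u0,u1) x Y Z) X = 0 \<and>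
     deriv (\<lambda>x. Rpoly (k0,k1,u0,u1) X x Z) Y = 0 \<and>
     deriv (\<lambda>x. Rpoly (k0,k1,u0,u1) X Y x) Z = 0" unfolding singular_point_def by simp
  also have "\<dots> \<longleftrightarrow> sg (bar k0) (bar k1) (bar u0) (bar u1) X Y Z"
    unfolding DERIV_imp_deriv[OF d1] DERIV_imp_deriv[OF d2] DERIV_imp_deriv[OF d3]
    unfolding sg_def singp_def R p0_def p1_def p2_def p3_def
    by (simp add: ac_simps)
  finally show ?thesis .
qed

lemma root_iff: "(v - (k::complex)) * (v + inverse k) = 0 \<longleftrightarrow> (v = k \<or> v = -1/k)"
proof -
  have "-1/k = - inverse k" by (simp add: inverse_eq_divide)
  moreover have "v + inverse k = 0 \<longleftrightarrow> v = - inverse k" by (simp add: eq_neg_iff_add_eq_0)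
  ultimately show ?thesis by simp
qed

lemma onedim_iff:
  assumes "k0 \<noteq> 0" "k1 \<noteq> 0" "u0 \<noteq> 0" "u1 \<noteq> 0"
  shows "one_dim_rep_extending (k0,k1,u0,u1) (X,Y,Z) \<longleftrightarrow> cross k0 k1 u0 u1 X Y Z"
proof -
  have e: "\<And>v0 v1 w0 w1 :: complex. w1 * v1 * v0 * w0 = 1 \<Longrightarrow> inverse w0 * inverse v1 = v0 * w1"
  proof -
    fix v0 v1 w0 w1 :: complex assume h: "w1 * v1 * v0 * w0 = 1"
    hence "w0 \<noteq> 0" "v1 \<noteq> 0" by auto
    thus "inverse w0 * inverse v1 = v0 * w1" using h by (simp add: field_simps)
  qed
  show ?thesis
    unfolding one_dim_rep_extending_def cross_def prod.case root_iff
  proof (intro iffI; elim exE conjE)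
    fix v0 v1 w0 w1 assume h: "(v0 = k0 \<or> v0 = - 1 / k0)" "(v1 = k1 \<or> v1 = - 1 / k1)"
      "(w0 = u0 \<or> w0 = - 1 / u0)" "(w1 = u1 \<or> w1 = - 1 / u1)" "w1 * v1 * v0 * w0 = 1"
      "X = w1 * v1 + v0 * w0" "Y = v1 * v0 + w0 * w1" "Z = v1 * w0 + inverse w0 * inverse v1"
    show "\<exists>v0 v1 w0 w1. (v0 = k0 \<or> v0 = - 1 / k0) \<and> (v1 = k1 \<or> v1 = - 1 / k1) \<and>
         (w0 = u0 \<or> w0 = - 1 / u0) \<and> (w1 = u1 \<or> w1 = - 1 / u1) \<and> w1 * v1 * v0 * w0 = 1 \<and>
         X = w1 * v1 + v0 * w0 \<and> Y = v1 * v0 + w0 * w1 \<and> Z = v1 * w0 + v0 * w1"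
      apply (rule exI[of _ v0], rule exI[of _ v1], rule exI[of _ w0], rule exI[of _ w1])
      using h e[OF h(5)] by simp
  next
    fix v0 v1 w0 w1 assume h: "(v0 = k0 \<or> v0 = - 1 / k0)" "(v1 = k1 \<or> v1 = - 1 / k1)"
      "(w0 = u0 \<or> w0 = - 1 / u0)" "(w1 = u1 \<or> w1 = - 1 / u1)" "w1 * v1 * v0 * w0 = 1"
      "X = w1 * v1 + v0 * w0" "Y = v1 * v0 + w0 * w1" "Z = v1 * w0 + v0 * w1"
    show "\<exists>v0 v1 w0 w1. (v0 = k0 \<or> v0 = - 1 / k0) \<and> (v1 = k1 \<or> v1 = - 1 / k1) \<and>
         (w0 = u0 \<or> w0 = - 1 / u0) \<and> (w1 = u1 \<or> w1 = - 1 / u1) \<and> w1 * v1 * v0 * w0 = 1 \<and>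
         X = w1 * v1 + v0 * w0 \<and> Y = v1 * v0 + w0 * w1 \<and> Z = v1 * w0 + inverse w0 * inverse v1"
      apply (rule exI[of _ v0], rule exI[of _ v1], rule exI[of _ w0], rule exI[of _ w1])
      using h e[OF h(5)] by simp
  qed
qed



definition dl :: "tpt \<Rightarrow> complex" where "dl s = snd (snd (snd (snd s)))"
definition Q2 :: "tpt \<Rightarrow> complex" where "Q2 s = (\<Sum>i\<in>{0..<4}. scomp s i + inverse (scomp s i))"
definition Q0 :: "tpt \<Rightarrow> complex" where
  "Q0 s = -((Q2 s)^2 - (\<Sum>i\<in>{0..<4}. (scomp s i + inverse (scomp s i))^2))/2 - 8"
definition Q1 :: "tpt \<Rightarrow> complex" where
  "Q1 s = ((\<Prod>i\<in>{0..<4}. 1 + scomp s i) + (\<Prod>i\<in>{0..<4}. 1 - scomp s i)) / (2 * dl s)"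
definition Q3 :: "tpt \<Rightarrow> complex" where
  "Q3 s = ((\<Prod>i\<in>{0..<4}. 1 - scomp s i) - (\<Prod>i\<in>{0..<4}. 1 + scomp s i)) / (2 * dl s)"

lemma four: "{0..<4::nat} = {0,1,2,3}" by auto

lemma theta_Q:
  fixes a b c d :: complex
  assumes nz: "a \<noteq> 0" "b \<noteq> 0" "c \<noteq> 0" "d \<noteq> 0"
  shows "Q0 (theta (a,b,c,d)) = (bar a)^2 + (bar b)^2 + (bar c)^2 + (bar d)^2 - bar a * bar b * bar c * bar d"
    "Q1 (theta (a,b,c,d)) = bar c * bar a + bar b * bar d"
    "Q2 (theta (a,b,c,d)) = bar d * bar c + bar a * bar b"
    "Q3 (theta (a,b,c,d)) = bar a * bar d + bar b * bar c"
  using nz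
  by (simp_all add: Q0_def Q1_def Q2_def Q3_def dl_def four scomp_def theta_def bar_def field_simps; algebra)+



lemma scomp_w:
  assumes "i < 4"
  shows "scomp (weyl_act (\<sigma>,S) s) i = (if i \<in> S then inverse (scomp s (\<sigma> i)) else scomp s (\<sigma> i))"
proof -
  have "i = 0 \<or> i = 1 \<or> i = 2 \<or> i = 3" using assms by auto
  thus ?thesis unfolding weyl_act_def Let_def by (cases s) (auto simp: scomp_def)
qed

lemma dl_w: "dl (weyl_act (\<sigma>,S) s) = dl s * (\<Prod>i\<in>S. inverse (scomp s (\<sigma> i)))"
  unfolding weyl_act_def Let_def dl_def by simp

lemma prod_if_S:
  fixes g :: "nat \<Rightarrow> complex"
  assumes "S \<subseteq> {0..<4}"
  shows "(\<Prod>i\<in>{0..<4}. if i \<in> S then g i else 1) = (\<Prod>i\<in>S. g i)"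
proof -
  have "(\<Prod>i\<in>{0..<4}. if i \<in> S then g i else 1) = (\<Prod>i\<in>{0..<4::nat} \<inter> {x. x \<in> S}. g i) * (\<Prod>i\<in>{0..<4} \<inter> - {x. x \<in> S}. 1)"
    by (rule prod.If_cases) simp
  also have "{0..<4::nat} \<inter> {x. x \<in> S} = S" using assms by auto
  finally show ?thesis by simp
qed

lemma W_inv:
  assumes w: "(\<sigma>,S) \<in> weylD4" and nz: "\<And>i. i < 4 \<Longrightarrow> scomp s i \<noteq> 0" and dz: "dl s \<noteq> 0"
  shows "Q0 (weyl_act (\<sigma>,S) s) = Q0 s" "Q1 (weyl_act (\<sigma>,S) s) = Q1 s"
    "Q2 (weyl_act (\<sigma>,S) s) = Q2 s" "Q3 (weyl_act (\<sigma>,S) s) = Q3 s"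
proof -
  have bij: "bij_betw \<sigma> {0..<4} {0..<4}" and Ssub: "S \<subseteq> {0..<4}" and ev: "even (card S)"
    using w unfolding weylD4_def by auto
  have sig: "\<And>i. i < 4 \<Longrightarrow> \<sigma> i < 4" using bij unfolding bij_betw_def by auto
  define f where "f i = scomp s (\<sigma> i)" for i
  have fnz: "\<And>i. i < 4 \<Longrightarrow> f i \<noteq> 0" unfolding f_def using nz sig by auto
  let ?ws = "weyl_act (\<sigma>,S) s"
  have sw: "\<And>i. i \<in> {0..<4} \<Longrightarrow> scomp ?ws i = (if i \<in> S then inverse (f i) else f i)"
    unfolding f_def using scomp_w by auto
  have reidx: "\<And>g::complex \<Rightarrow> complex. (\<Sum>i\<in>{0..<4}. g (f i)) = (\<Sum>i\<in>{0..<4}. g (scomp s i))"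
    unfolding f_def by (rule sum.reindex_bij_betw[OF bij])
  have reidxp: "\<And>g::complex \<Rightarrow> complex. (\<Prod>i\<in>{0..<4}. g (f i)) = (\<Prod>i\<in>{0..<4}. g (scomp s i))"
    unfolding f_def by (rule prod.reindex_bij_betw[OF bij])
  have z: "\<And>i. i \<in> {0..<4} \<Longrightarrow> scomp ?ws i + inverse (scomp ?ws i) = f i + inverse (f i)"
    using sw by (simp add: add.commute)
  have Q2e: "Q2 ?ws = Q2 s"
  proof -
    have "Q2 ?ws = (\<Sum>i\<in>{0..<4}. f i + inverse (f i))" unfolding Q2_def using z by (rule sum.cong[OF refl])
    also have "\<dots> = Q2 s" unfolding Q2_def by (rule reidx)
    finally show ?thesis .
  qed
  show "Q2 ?ws = Q2 s" by (rule Q2e)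
  show "Q0 ?ws = Q0 s"
  proof -
    have "(\<Sum>i\<in>{0..<4}. (scomp ?ws i + inverse (scomp ?ws i))^2) = (\<Sum>i\<in>{0..<4}. (f i + inverse (f i))^2)"
      using z by (intro sum.cong[OF refl]) simp
    also have "\<dots> = (\<Sum>i\<in>{0..<4}. (scomp s i + inverse (scomp s i))^2)" by (rule reidx)
    finally show ?thesis unfolding Q0_def Q2e by simp
  qed
  define M where "M = (\<Prod>i\<in>S. inverse (f i))"
  have Mnz: "M \<noteq> 0" unfolding M_def using fnz Ssub by (auto simp: finite_subset)
  have dlw: "dl ?ws = dl s * M" unfolding dl_w M_def f_def ..
  have P1: "(\<Prod>i\<in>{0..<4}. 1 + scomp ?ws i) = (\<Prod>i\<in>{0..<4}. 1 + scomp s i) * M"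
  proof -
    have "(\<Prod>i\<in>{0..<4}. 1 + scomp ?ws i) = (\<Prod>i\<in>{0..<4}. (1 + f i) * (if i \<in> S then inverse (f i) else 1))"
      using sw fnz by (intro prod.cong) (auto simp: field_simps)
    also have "\<dots> = (\<Prod>i\<in>{0..<4}. 1 + f i) * (\<Prod>i\<in>{0..<4}. if i \<in> S then inverse (f i) else 1)"
      by (rule prod.distrib)
    also have "\<dots> = (\<Prod>i\<in>{0..<4}. 1 + scomp s i) * M"
      unfolding prod_if_S[OF Ssub] M_def reidxp[of "\<lambda>x. 1 + x"] ..
    finally show ?thesis .
  qed
  have P2: "(\<Prod>i\<in>{0..<4}. 1 - scomp ?ws i) = (\<Prod>i\<in>{0..<4}. 1 - scomp s i) * M"
  proof -
    have "(\<Prod>i\<in>{0..<4}. 1 - scomp ?ws i) = (\<Prod>i\<in>{0..<4}. (1 - f i) * (if i \<in> S then - inverse (f i) else 1))"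
      using sw fnz by (intro prod.cong) (auto simp: field_simps)
    also have "\<dots> = (\<Prod>i\<in>{0..<4}. 1 - f i) * (\<Prod>i\<in>{0..<4}. if i \<in> S then - inverse (f i) else 1)"
      by (rule prod.distrib)
    also have "(\<Prod>i\<in>{0..<4}. if i \<in> S then - inverse (f i) else 1) = (\<Prod>i\<in>S. - inverse (f i))"
      by (rule prod_if_S[OF Ssub])
    also have "\<dots> = M" unfolding prod_uminus M_def using ev by simp
    finally show ?thesis unfolding reidxp[of "\<lambda>x. 1 - x"] .
  qed
  show "Q1 ?ws = Q1 s" unfolding Q1_def P1 P2 dlw using Mnz dz by (simp add: field_simps)
  show "Q3 ?ws = Q3 s" unfolding Q3_def P1 P2 dlw using Mnz dz by (simp add: field_simps)
qed



definition sigA :: "nat \<Rightarrow> nat" where "sigA i = (if i = 1 then 3 else if i = 3 then 1 else i)"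
definition sigC :: "nat \<Rightarrow> nat" where "sigC i = (if i = 0 then 2 else if i = 2 then 0 else i)"

lemma bijA: "bij_betw sigA {0..<4} {0..<4}"
  unfolding bij_betw_def inj_on_def four sigA_def by auto
lemma bijC: "bij_betw sigC {0..<4} {0..<4}"
  unfolding bij_betw_def inj_on_def four sigC_def by auto

lemma W_id: "(id, {}) \<in> weylD4" unfolding weylD4_def by auto
lemma W_A: "(sigA, {}) \<in> weylD4" unfolding weylD4_def using bijA by auto
lemma W_B: "(sigA, {2,3}) \<in> weylD4" unfolding weylD4_def using bijA by auto
lemma W_C: "(sigC, {}) \<in> weylD4" unfolding weylD4_def using bijC by auto
lemma W_D: "(sigC, {0,2}) \<in> weylD4" unfolding weylD4_def using bijC by auto

lemma wact_id: "weyl_act (id, {}) (theta t) = theta t"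
  by (cases t) (simp add: weyl_act_def Let_def scomp_def theta_def)

lemma wact_A: "weyl_act (sigA, {}) (theta (a,b,c,d)) = (a*b, c*d, -c/d, -a/b, a*c)"
  by (simp add: weyl_act_def Let_def scomp_def theta_def sigA_def)
lemma wact_B: "weyl_act (sigA, {2,3}) (theta (a,b,c,d)) = (a*b, c*d, inverse (-c/d), inverse (-a/b), a*c * (inverse (-c/d) * inverse (-a/b)))"
  by (simp add: weyl_act_def Let_def scomp_def theta_def sigA_def)
lemma wact_C: "weyl_act (sigC, {}) (theta (a,b,c,d)) = (-c/d, -a/b, a*b, c*d, a*c)"
  by (simp add: weyl_act_def Let_def scomp_def theta_def sigC_def)
lemma wact_D: "weyl_act (sigC, {0,2}) (theta (a,b,c,d)) = (inverse (-c/d), -a/b, inverse (a*b), c*d, a*c * (inverse (-c/d) * inverse (a*b)))"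
  by (simp add: weyl_act_def Let_def scomp_def theta_def sigC_def)



lemma onedim_self:
  fixes k0 k1 u0 u1 :: complex
  assumes "u1 * k1 * k0 * u0 = 1" "X = u1 * k1 + k0 * u0" "Y = k1 * k0 + u0 * u1" "Z = k1 * u0 + k0 * u1"
  shows "one_dim_rep_extending (k0,k1,u0,u1) (X,Y,Z)"
proof -
  have nz: "k0 \<noteq> 0" "k1 \<noteq> 0" "u0 \<noteq> 0" "u1 \<noteq> 0" using assms(1) by auto
  have "cross k0 k1 u0 u1 X Y Z" unfolding cross_def
    apply (rule exI[of _ k0], rule exI[of _ k1], rule exI[of _ u0], rule exI[of _ u1])
    using assms by simp
  thus ?thesis using onedim_iff[OF nz] by simp
qed

lemma sqrt_ex: "\<exists>t::complex. t^2 = z" by (rule exI[of _ "csqrt z"]) simp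

lemma rhsA:
  fixes a b c d :: complex
  assumes nz: "a \<noteq> 0" "b \<noteq> 0" "c \<noteq> 0" "d \<noteq> 0" and x: "a^2 = -1"
  shows "\<exists>w\<in>weylD4. \<exists>t'. nonzero_params t' \<and> theta t' = weyl_act w (theta (a,b,c,d)) \<and>
        one_dim_rep_extending t' (a * bar c, a * bar b, a * bar d)"
proof -
  obtain t1 where T: "t1^2 = -(a*b*c*d)" using sqrt_ex by blast
  have t1: "t1 \<noteq> 0" using T nz by auto
  have n: "nonzero_params (t1, a*b/t1, a*c/t1, -t1/(b*c))" unfolding nonzero_params_def using nz t1 by simp
  have th: "theta (t1, a*b/t1, a*c/t1, -t1/(b*c)) = (a*b, c*d, -c/d, -a/b, a*c)"
  proof -
    have "-t1/(a*b/t1) = c*d" using T nz t1 by (simp add: field_simps power2_eq_square)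
    moreover have "-(a*c/t1)/(-t1/(b*c)) = -c/d" using T nz t1 by (simp add: field_simps power2_eq_square)
    moreover have "(a*c/t1) * (-t1/(b*c)) = -a/b" using nz t1 by (simp add: field_simps)
    ultimately show ?thesis unfolding theta_def using t1 nz by simp
  qed
  have od: "one_dim_rep_extending (t1, a*b/t1, a*c/t1, -t1/(b*c)) (a * bar c, a * bar b, a * bar d)"
  proof (rule onedim_self)
    show "-t1/(b*c) * (a*b/t1) * t1 * (a*c/t1) = 1" using nz t1 x by (simp add: field_simps power2_eq_square)
    show "a * bar c = -t1/(b*c) * (a*b/t1) + t1 * (a*c/t1)" using nz t1 unfolding bar_def by (simp add: field_simps)
    show "a * bar b = a*b/t1 * t1 + a*c/t1 * (-t1/(b*c))" using nz t1 unfolding bar_def by (simp add: field_simps)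
    have "a * (-a) = 1" using x by (simp add: power2_eq_square)
    hence ia: "inverse a = -a" by (rule inverse_unique)
    show "a * bar d = a*b/t1 * (a*c/t1) + t1 * (-t1/(b*c))" using nz t1 T x ia unfolding bar_def
      by (simp add: field_simps power2_eq_square) algebra?
  qed
  show ?thesis using W_A n th od wact_A by metis
qed

lemma rhsB:
  fixes a b c d :: complex
  assumes nz: "a \<noteq> 0" "b \<noteq> 0" "c \<noteq> 0" "d \<noteq> 0" and x: "b^2 = -1"
  shows "\<exists>w\<in>weylD4. \<exists>t'. nonzero_params t' \<and> theta t' = weyl_act w (theta (a,b,c,d)) \<and>
        one_dim_rep_extending t' (b * bar d, b * bar a, b * bar c)"
proof -
  obtain t1 where T: "t1^2 = -(a*b*c*d)" using sqrt_ex by blast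
  have t1: "t1 \<noteq> 0" using T nz by auto
  have "b * (-b) = 1" using x by (simp add: power2_eq_square)
  hence ib: "inverse b = -b" by (rule inverse_unique)
  have n: "nonzero_params (t1, a*b/t1, b*d/t1, -t1/(a*d))" unfolding nonzero_params_def using nz t1 by simp
  have th: "theta (t1, a*b/t1, b*d/t1, -t1/(a*d)) = (a*b, c*d, inverse (-c/d), inverse (-a/b), a*c * (inverse (-c/d) * inverse (-a/b)))"
  proof -
    have "-t1/(a*b/t1) = c*d" using T nz t1 by (simp add: field_simps power2_eq_square)
    moreover have "-(b*d/t1)/(-t1/(a*d)) = inverse (-c/d)" using T nz t1 by (simp add: field_simps power2_eq_square)
    moreover have "(b*d/t1) * (-t1/(a*d)) = inverse (-a/b)" using nz t1 by (simp add: field_simps)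
    moreover have "t1 * (b*d/t1) = a*c * (inverse (-c/d) * inverse (-a/b))" using nz t1 by (simp add: field_simps)
    ultimately show ?thesis unfolding theta_def using t1 nz by simp
  qed
  have od: "one_dim_rep_extending (t1, a*b/t1, b*d/t1, -t1/(a*d)) (b * bar d, b * bar a, b * bar c)"
  proof (rule onedim_self)
    show "-t1/(a*d) * (a*b/t1) * t1 * (b*d/t1) = 1" using nz t1 x by (simp add: field_simps power2_eq_square)
    show "b * bar d = -t1/(a*d) * (a*b/t1) + t1 * (b*d/t1)" using nz t1 unfolding bar_def by (simp add: field_simps)
    show "b * bar a = a*b/t1 * t1 + b*d/t1 * (-t1/(a*d))" using nz t1 unfolding bar_def by (simp add: field_simps)
    show "b * bar c = a*b/t1 * (b*d/t1) + t1 * (-t1/(a*d))" using nz t1 T x ib unfolding bar_def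
      by (simp add: field_simps power2_eq_square) algebra?
  qed
  show ?thesis using W_B n th od wact_B by metis
qed

lemma rhsC:
  fixes a b c d :: complex
  assumes nz: "a \<noteq> 0" "b \<noteq> 0" "c \<noteq> 0" "d \<noteq> 0" and x: "c^2 = -1"
  shows "\<exists>w\<in>weylD4. \<exists>t'. nonzero_params t' \<and> theta t' = weyl_act w (theta (a,b,c,d)) \<and>
        one_dim_rep_extending t' (c * bar a, c * bar d, c * bar b)"
proof -
  obtain t1 where T0: "t1^2 = -(a*c)/(b*d)" using sqrt_ex by blast
  have T: "t1^2 * (b*d) = -(a*c)" using T0 nz by (simp add: field_simps)
  have t1: "t1 \<noteq> 0" using T nz by auto
  have "c * (-c) = 1" using x by (simp add: power2_eq_square)
  hence ic: "inverse c = -c" by (rule inverse_unique)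
  have n: "nonzero_params (t1, -c/(d*t1), a*c/t1, d*t1/a)" unfolding nonzero_params_def using nz t1 by simp
  have th: "theta (t1, -c/(d*t1), a*c/t1, d*t1/a) = (-c/d, -a/b, a*b, c*d, a*c)"
  proof -
    have "t1 * (-c/(d*t1)) = -c/d" using nz t1 by (simp add: field_simps)
    moreover have "-t1/(-c/(d*t1)) = -a/b" using T nz t1 by (simp add: field_simps power2_eq_square) algebra?
    moreover have "-(a*c/t1)/(d*t1/a) = a*b" using T nz t1 x by (simp add: field_simps power2_eq_square) algebra?
    moreover have "(a*c/t1) * (d*t1/a) = c*d" using nz t1 by (simp add: field_simps)
    ultimately show ?thesis unfolding theta_def using t1 nz by simp
  qed
  have od: "one_dim_rep_extending (t1, -c/(d*t1), a*c/t1, d*t1/a) (c * bar a, c * bar d, c * bar b)"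
  proof (rule onedim_self)
    show "d*t1/a * (-c/(d*t1)) * t1 * (a*c/t1) = 1" using nz t1 x by (simp add: field_simps power2_eq_square)
    show "c * bar a = d*t1/a * (-c/(d*t1)) + t1 * (a*c/t1)" using nz t1 unfolding bar_def by (simp add: field_simps)
    show "c * bar d = -c/(d*t1) * t1 + a*c/t1 * (d*t1/a)" using nz t1 unfolding bar_def by (simp add: field_simps)
    show "c * bar b = -c/(d*t1) * (a*c/t1) + t1 * (d*t1/a)" using nz t1 T x ic unfolding bar_def
      by (simp add: field_simps power2_eq_square) algebra?
  qed
  show ?thesis using W_C n th od wact_C by metis
qed

lemma rhsD:
  fixes a b c d :: complex
  assumes nz: "a \<noteq> 0" "b \<noteq> 0" "c \<noteq> 0" "d \<noteq> 0" and x: "d^2 = -1"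
  shows "\<exists>w\<in>weylD4. \<exists>t'. nonzero_params t' \<and> theta t' = weyl_act w (theta (a,b,c,d)) \<and>
        one_dim_rep_extending t' (d * bar b, d * bar c, d * bar a)"
proof -
  obtain t1 where T0: "t1^2 = -(a*d)/(b*c)" using sqrt_ex by blast
  have T: "t1^2 * (b*c) = -(a*d)" using T0 nz by (simp add: field_simps)
  have t1: "t1 \<noteq> 0" using T nz by auto
  have "d * (-d) = 1" using x by (simp add: power2_eq_square)
  hence id: "inverse d = -d" by (rule inverse_unique)
  have n: "nonzero_params (t1, -d/(c*t1), -d/(b*t1), -b*c*t1)" unfolding nonzero_params_def using nz t1 by simp
  have th: "theta (t1, -d/(c*t1), -d/(b*t1), -b*c*t1) = (inverse (-c/d), -a/b, inverse (a*b), c*d, a*c * (inverse (-c/d) * inverse (a*b)))"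
  proof -
    have "t1 * (-d/(c*t1)) = inverse (-c/d)" using nz t1 by (simp add: field_simps)
    moreover have "-t1/(-d/(c*t1)) = -a/b" using T nz t1 by (simp add: field_simps power2_eq_square) algebra?
    moreover have "-(-d/(b*t1))/(-b*c*t1) = inverse (a*b)" using T nz t1 x by (simp add: field_simps power2_eq_square) algebra?
    moreover have "(-d/(b*t1)) * (-b*c*t1) = c*d" using nz t1 by (simp add: field_simps)
    moreover have "t1 * (-d/(b*t1)) = a*c * (inverse (-c/d) * inverse (a*b))" using nz t1 by (simp add: field_simps)
    ultimately show ?thesis unfolding theta_def using t1 nz by simp
  qed
  have od: "one_dim_rep_extending (t1, -d/(c*t1), -d/(b*t1), -b*c*t1) (d * bar b, d * bar c, d * bar a)"
  proof (rule onedim_self)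
    show "-b*c*t1 * (-d/(c*t1)) * t1 * (-d/(b*t1)) = 1" using nz t1 x by (simp add: field_simps power2_eq_square)
    show "d * bar b = -b*c*t1 * (-d/(c*t1)) + t1 * (-d/(b*t1))" using nz t1 unfolding bar_def by (simp add: field_simps)
    show "d * bar c = -d/(c*t1) * t1 + -d/(b*t1) * (-b*c*t1)" using nz t1 unfolding bar_def by (simp add: field_simps)
    show "d * bar a = -d/(c*t1) * (-d/(b*t1)) + t1 * (-b*c*t1)" using nz t1 T x id unfolding bar_def
      by (simp add: field_simps power2_eq_square) algebra?
  qed
  show ?thesis using W_D n th od wact_D by metis
qed



lemma sg_Q:
  fixes a b c d :: complex
  assumes nz: "a \<noteq> 0" "b \<noteq> 0" "c \<noteq> 0" "d \<noteq> 0"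
  shows "sg (bar a) (bar b) (bar c) (bar d) X Y Z \<longleftrightarrow>
    singp (Q0 (theta (a,b,c,d))) (Q1 (theta (a,b,c,d))) (Q2 (theta (a,b,c,d))) (Q3 (theta (a,b,c,d))) X Y Z"
  unfolding sg_def theta_Q[OF nz] ..

lemma theta_nz:
  fixes a b c d :: complex
  assumes nz: "a \<noteq> 0" "b \<noteq> 0" "c \<noteq> 0" "d \<noteq> 0"
  shows "\<And>i. i < 4 \<Longrightarrow> scomp (theta (a,b,c,d)) i \<noteq> 0" "dl (theta (a,b,c,d)) \<noteq> 0"
proof -
  fix i :: nat assume "i < 4"
  hence "i = 0 \<or> i = 1 \<or> i = 2 \<or> i = 3" by auto
  thus "scomp (theta (a,b,c,d)) i \<noteq> 0" using nz by (auto simp: scomp_def theta_def)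
next
  show "dl (theta (a,b,c,d)) \<noteq> 0" using nz by (simp add: dl_def theta_def)
qed

theorem proposition3p5:
  fixes t :: params and chi :: "complex \<times> complex \<times> complex"
  assumes "nonzero_params t"
    and "case chi of (c1, c2, c3) \<Rightarrow> Rpoly t c1 c2 c3 = 0"
  shows "singular_point t chi \<longleftrightarrow>
    (\<exists>w\<in>weylD4. \<exists>t'. nonzero_params t' \<and> theta t' = weyl_act w (theta t) \<and>
        one_dim_rep_extending t' chi)"
proof -
  obtain k0 k1 u0 u1 where t: "t = (k0,k1,u0,u1)" by (cases t) auto
  obtain X Y Z where chi: "chi = (X,Y,Z)" by (cases chi) auto
  have nz: "k0 \<noteq> 0" "k1 \<noteq> 0" "u0 \<noteq> 0" "u1 \<noteq> 0" using assms(1) unfolding nonzero_params_def t by auto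
  have si: "singular_point t chi \<longleftrightarrow> sg (bar k0) (bar k1) (bar u0) (bar u1) X Y Z"
    unfolding t chi by (rule sing_iff)
  show ?thesis
  proof
    assume "singular_point t chi"
    hence "Concl k0 k1 u0 u1 X Y Z" using Mall[OF nz] si by blast
    hence "cross k0 k1 u0 u1 X Y Z \<or>
      (k0^2 = -1 \<and> X = k0 * bar u0 \<and> Y = k0 * bar k1 \<and> Z = k0 * bar u1) \<or>
      (k1^2 = -1 \<and> X = k1 * bar u1 \<and> Y = k1 * bar k0 \<and> Z = k1 * bar u0) \<or>
      (u0^2 = -1 \<and> X = u0 * bar k0 \<and> Y = u0 * bar u1 \<and> Z = u0 * bar k1) \<or>
      (u1^2 = -1 \<and> X = u1 * bar k1 \<and> Y = u1 * bar u0 \<and> Z = u1 * bar k0)"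
      unfolding Concl_def .
    thus "\<exists>w\<in>weylD4. \<exists>t'. nonzero_params t' \<and> theta t' = weyl_act w (theta t) \<and> one_dim_rep_extending t' chi"
    proof (elim disjE conjE)
      assume c: "cross k0 k1 u0 u1 X Y Z"
      have "one_dim_rep_extending t chi" unfolding t chi using onedim_iff[OF nz] c by blast
      thus ?thesis using W_id wact_id[of t] assms(1) by metis
    next
      assume x: "k0^2 = -1" and e: "X = k0 * bar u0" "Y = k0 * bar k1" "Z = k0 * bar u1"
      show ?thesis unfolding t chi e by (rule rhsA[OF nz x])
    next
      assume x: "k1^2 = -1" and e: "X = k1 * bar u1" "Y = k1 * bar k0" "Z = k1 * bar u0"
      show ?thesis unfolding t chi e by (rule rhsB[OF nz x])
    next
      assume x: "u0^2 = -1" and e: "X = u0 * bar k0" "Y = u0 * bar u1" "Z = u0 * bar k1"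
      show ?thesis unfolding t chi e by (rule rhsC[OF nz x])
    next
      assume x: "u1^2 = -1" and e: "X = u1 * bar k1" "Y = u1 * bar u0" "Z = u1 * bar k0"
      show ?thesis unfolding t chi e by (rule rhsD[OF nz x])
    qed
  next
    assume "\<exists>w\<in>weylD4. \<exists>t'. nonzero_params t' \<and> theta t' = weyl_act w (theta t) \<and> one_dim_rep_extending t' chi"
    then obtain w t' where w: "w \<in> weylD4" and n': "nonzero_params t'" and th: "theta t' = weyl_act w (theta t)"
      and od: "one_dim_rep_extending t' chi" by blast
    obtain \<sigma> S where wS: "w = (\<sigma>, S)" by (cases w) auto
    obtain a b c d where t': "t' = (a,b,c,d)" by (cases t') auto
    have nz': "a \<noteq> 0" "b \<noteq> 0" "c \<noteq> 0" "d \<noteq> 0" using n' unfolding nonzero_params_def t' by auto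
    have "cross a b c d X Y Z" using od onedim_iff[OF nz'] unfolding t' chi by blast
    hence s': "sg (bar a) (bar b) (bar c) (bar d) X Y Z" by (rule cross_sgb[OF nz'])
    have wi: "Q0 (theta t') = Q0 (theta t)" "Q1 (theta t') = Q1 (theta t)"
      "Q2 (theta t') = Q2 (theta t)" "Q3 (theta t') = Q3 (theta t)"
      unfolding th wS t using W_inv[OF w[unfolded wS], of "theta (k0,k1,u0,u1)"] theta_nz[OF nz] by auto
    have "sg (bar k0) (bar k1) (bar u0) (bar u1) X Y Z"
      using s' unfolding sg_Q[OF nz] sg_Q[OF nz'] using wi unfolding t t' by simp
    thus "singular_point t chi" using si by blast
  qed
qed


end
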